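(* Let $\mathbf{x}\in\mathbb{R}^p$ be a random vector with a joint density, and let $\Pi\in\{1,\dots,K\}$ be a random missingness-pattern label, with $\Pi=1$ meaning the case is complete (all coordinates observed) and $\Pi=k$ meaning the coordinates in $\mathbf{mis}(k)$ are missing and those in $\mathbf{obs}(k)$ are observed. Let $\mathbf{obs}=\bigcap_{k=1}^K\mathbf{obs}(k)\neq\varnothing$ and $\mathbf{mis}=\bigcup_{k=1}^K\mathbf{mis}(k)$, and assume the MAR condition: $\mathbf{x}_{\mathbf{mis}}$ is conditionally independent of $\Pi$ given $\mathbf{x}_{\mathbf{obs}}$. Let $P$ denote the distribution of $\mathbf{x}$ given $\Pi=1$ (the complete-case distribution), with density $\phi(\cdot\mid \Pi=1)$. Fix $k\in\{2,\dots,K\}$ and let $G_k$ be a generator which, given an input $\mathbf{x}$, an independent noise $\mathbf{z}\sim\mathcal{N}(0,\mathbf{I}_p)$ and the mask $\mathbf{m}_k$, outputs $\widehat{\mathbf{x}}=\mathbf{x}\odot\mathbf{m}_k+\widehat{G}_k(\mathbf{x}\odot\mathbf{m}_k+\mathbf{z}\odot(1-\mathbf{m}_k))\odot(1-\mathbf{m}_k)$, so that the imputed part $\widehat{\mathbf{x}}_{\mathbf{mis}(k)}$ has a conditional density $p_{\theta_k}(\cdot\mid\mathbf{x}_{\mathbf{obs}(k)})$ depending only on $\mathbf{x}_{\mathbf{obs}(k)}$. Let $P_k$ be the distribution of $\widehat{\mathbf{x}}$ when $\mathbf{x}\sim P$. Suppose $(G_2,D_2,\dots,G_K,D_K)$ is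 an optimal solution of the minimax problem $$\min_{G_2,\dots,G_K}\max_{D_2,\dots,D_K}\sum_{k=2}^K\Big(\mathbb{E}_{\widehat{\mathbf{x}}\sim P_k}[D_k(\widehat{\mathbf{x}})]-\mathbb{E}_{\mathbf{x}\sim P}[D_k(\mathbf{x})]\Big)$$ over 1-Lipschitz discriminators $D_k:\mathbb{R}^p\to\mathbb{R}$, in the sense that the optimal value is $0$, i.e. the Wasserstein-1 distance between $P$ and $P_k$ is zero, so $P_k=P$. Then for (almost) every $t_1$ in the support of the complete-case distribution of $\mathbf{x}_{\mathbf{obs}(k)}$ and every $t_2$, $$p_{\theta_k}(\widehat{\mathbf{x}}_{\mathbf{mis}(k)}=t_2\mid \mathbf{x}_{\mathbf{obs}(k)}=t_1)=f(\mathbf{x}_{\mathbf{mis}(k)}=t_2\mid\mathbf{x}_{\mathbf{obs}(k)}=t_1),$$ i.e. $G_k$ learns the true conditional distribution of the missing variables of pattern $k$ given its observed variables.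
   Context: Data consist of $p$ variables; cases are grouped into $K$ missingness patterns. For pattern $k$, $\mathbf{obs}(k)\subseteq\{1,\dots,p\}$ is the index set of observed variables and $\mathbf{mis}(k)$ its complement; pattern $1$ has $\mathbf{obs}(1)=\{1,\dots,p\}$. The mask vector $\mathbf{m}_k\in\{0,1\}^p$ has $\mathbf{m}_k(j)=1$ iff $j\in\mathbf{obs}(k)$; $\odot$ is elementwise multiplication; $\widehat{G}_k:\mathbb{R}^p\to\mathbb{R}^p$ is the generator network. For an index set $S$, $\mathbf{x}_S$ is the subvector of $\mathbf{x}$ on $S$. $f(\mathbf{x}_{\mathbf{mis}(k)}\mid\mathbf{x}_{\mathbf{obs}(k)})$ denotes the true conditional density of $\mathbf{x}_{\mathbf{mis}(k)}$ given $\mathbf{x}_{\mathbf{obs}(k)}$ in the full (not pattern-conditioned) data distribution. *)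

theory Defs
  imports "HOL-Probability.Probability"
begin

text \<open>For an index set S, the subvector x_S is restrict x S, living in the product space
  Leb S (Lebesgue measure on R^S).\<close>

definition Leb :: "'i set \<Rightarrow> ('i \<Rightarrow> real) measure" where
  "Leb S = PiM S (\<lambda>_. lborel)"

definition mask :: "'i set \<Rightarrow> 'i \<Rightarrow> real" where
  "mask Obs j = (if j \<in> Obs then 1 else 0)"

definition std_gauss :: "('i \<Rightarrow> real) measure" where
  "std_gauss = PiM UNIV (\<lambda>_. density lborel (\<lambda>x. ennreal (std_normal_density x)))"

definition gen_out :: "(('i \<Rightarrow> real) \<Rightarrow> ('i \<Rightarrow> real)) \<Rightarrow> ('i \<Rightarrow> real)
    \<Rightarrow> ('i \<Rightarrow> real) \<Rightarrow> ('i \<Rightarrow> real) \<Rightarrow> ('i \<Rightarrow> real)" where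
  "gen_out Ghat m x z =
     (\<lambda>j. x j * m j + Ghat (\<lambda>i. x i * m i + z i * (1 - m i)) j * (1 - m j))"

definition marg :: "'i set \<Rightarrow> (('i \<Rightarrow> real) \<Rightarrow> real) \<Rightarrow> ('i \<Rightarrow> real) \<Rightarrow> real" where
  "marg S g t1 = (\<integral>w. g (merge S (- S) (t1, w)) \<partial>Leb (- S))"

definition cond_dens :: "'i set \<Rightarrow> (('i \<Rightarrow> real) \<Rightarrow> real) \<Rightarrow> ('i \<Rightarrow> real) \<Rightarrow> ('i \<Rightarrow> real) \<Rightarrow> real" where
  "cond_dens S g t1 t2 = g (merge S (- S) (t1, t2)) / marg S g t1"

text \<open>MAR: x_mis is conditionally independent of the pattern label given x_obs, where
  phi j is the joint density of (x, Pi = j) and f = sum_j phi j is the density of x.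
  In density form: f(x_mis, Pi=j | x_obs) = f(x_mis | x_obs) * P(Pi=j | x_obs), i.e.
  phi_j(x) f_obs(x_obs) = f(x) phi_{j,obs}(x_obs) for a.e. x, for every j.\<close>
definition MAR :: "nat \<Rightarrow> 'i set \<Rightarrow> (nat \<Rightarrow> ('i \<Rightarrow> real) \<Rightarrow> real) \<Rightarrow> bool" where
  "MAR K Ob \<phi> \<longleftrightarrow>
     (\<forall>j\<in>{1..K}. AE x in Leb UNIV.
        \<phi> j x * marg Ob (\<lambda>y. \<Sum>i\<in>{1..K}. \<phi> i y) (restrict x Ob)
        = (\<Sum>i\<in>{1..K}. \<phi> i x) * marg Ob (\<phi> j) (restrict x Ob))"

end

theory Submission
  imports Defs
begin

lemma gen_meas:
  fixes Ghat :: "('i::finite \<Rightarrow> real) \<Rightarrow> ('i \<Rightarrow> real)" and G :: "('i \<Rightarrow> real) measure"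
  assumes Gh: "Ghat \<in> Leb UNIV \<rightarrow>\<^sub>M Leb UNIV" and sG: "sets G = sets (Leb UNIV)"
  shows "(\<lambda>(x, z). gen_out Ghat m x z) \<in> Leb UNIV \<Otimes>\<^sub>M G \<rightarrow>\<^sub>M Leb UNIV"
proof -
  have e: "sets (Leb UNIV \<Otimes>\<^sub>M G) = sets (Leb UNIV \<Otimes>\<^sub>M Leb UNIV)"
    by (rule sets_pair_measure_cong) (auto simp: sG)
  have inner: "(\<lambda>(x::'i \<Rightarrow> real, z::'i\<Rightarrow>real). (\<lambda>i. x i * m i + z i * (1 - m i))) \<in> Leb UNIV \<Otimes>\<^sub>M Leb UNIV \<rightarrow>\<^sub>M Leb UNIV"
    unfolding Leb_def
    apply (rule measurable_PiM_single')
    subgoal for i by (simp add: case_prod_beta) measurable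
    by (auto simp: space_PiM)
  have "(\<lambda>(x, z). gen_out Ghat m x z) \<in> Leb UNIV \<Otimes>\<^sub>M Leb UNIV \<rightarrow>\<^sub>M Leb UNIV"
  proof -
    have gi: "(\<lambda>w. Ghat ((\<lambda>(x, z). (\<lambda>i. x i * m i + z i * (1 - m i))) w)) \<in> Leb UNIV \<Otimes>\<^sub>M Leb UNIV \<rightarrow>\<^sub>M Leb UNIV"
      using measurable_compose[OF inner Gh] .
    show ?thesis unfolding gen_out_def case_prod_beta'
      unfolding Leb_def
      apply (rule measurable_PiM_single'[where f="\<lambda>j w. fst w j * m j + Ghat (\<lambda>i. fst w i * m i + snd w i * (1 - m i)) j * (1 - m j)"])
      subgoal for j
      proof -
        have co: "(\<lambda>x. x j) \<in> Leb UNIV \<rightarrow>\<^sub>M lborel" unfolding Leb_def by measurable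
        have g1: "(\<lambda>w. Ghat ((\<lambda>(x, z). (\<lambda>i. x i * m i + z i * (1 - m i))) w) j) \<in> borel_measurable (Leb UNIV \<Otimes>\<^sub>M Leb UNIV)"
          using measurable_compose[OF gi co] by simp
        have g2: "(\<lambda>w. fst w j) \<in> borel_measurable (Leb UNIV \<Otimes>\<^sub>M Leb UNIV)"
          using measurable_compose[OF measurable_fst co] by simp
        show ?thesis
          using borel_measurable_add[OF borel_measurable_times[OF g2 borel_measurable_const] borel_measurable_times[OF g1 borel_measurable_const]]
          unfolding Leb_def[symmetric] by (simp add: case_prod_beta')
      qed
      by (auto simp: space_PiM)
  qed
  then show ?thesis by (subst measurable_cong_sets[OF e refl])
qed


interpretation PL: product_sigma_finite "\<lambda>_::'i. lborel"
  by (simp add: product_sigma_finite_def lborel.sigma_finite_measure_axioms)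

lemma Leb_sf: "sigma_finite_measure (Leb (S::'i::finite set))"
  unfolding Leb_def by (rule PL.sigma_finite) simp

lemma Leb_distr:
  fixes S :: "'i::finite set"
  shows "distr (Leb S \<Otimes>\<^sub>M Leb (-S)) (Leb UNIV) (merge S (-S)) = Leb UNIV"
  using PL.distr_merge[of S "-S"] unfolding Leb_def by simp

lemma merge_meas: "merge S (-S) \<in> Leb S \<Otimes>\<^sub>M Leb (-S) \<rightarrow>\<^sub>M Leb (UNIV::'i::finite set)"
  using measurable_merge[of S "-S" "\<lambda>_. lborel"] unfolding Leb_def by simp

lemma restr_meas: "T \<subseteq> S \<Longrightarrow> (\<lambda>x. restrict x T) \<in> Leb S \<rightarrow>\<^sub>M Leb T"
  unfolding Leb_def by (rule measurable_restrict_subset)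

lemma space_Leb: "space (Leb S) = (\<Pi>\<^sub>E i\<in>S. UNIV)"
  unfolding Leb_def by (simp add: space_PiM)

lemma restrict_in_Leb[simp]: "restrict x S \<in> space (Leb S)"
  by (simp add: space_Leb)

lemma restrict_Leb: "a \<in> space (Leb S) \<Longrightarrow> restrict a S = a"
  by (auto simp: space_Leb restrict_def fun_eq_iff PiE_def extensional_def)

lemma restrict_merge1: "t1 \<in> space (Leb S) \<Longrightarrow> restrict (merge S (-S) (t1, t2)) S = t1"
  by (auto simp: space_Leb restrict_def merge_def fun_eq_iff PiE_def extensional_def)

lemma restrict_merge2: "t2 \<in> space (Leb (-S)) \<Longrightarrow> restrict (merge S (-S) (t1, t2)) (-S) = t2"
  by (auto simp: space_Leb restrict_def merge_def fun_eq_iff PiE_def extensional_def)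

lemma nn_Leb_split:
  fixes S :: "'i::finite set"
  assumes "f \<in> borel_measurable (Leb UNIV)"
  shows "(\<integral>\<^sup>+ x. f x \<partial>Leb UNIV) = (\<integral>\<^sup>+ w. f (merge S (-S) w) \<partial>(Leb S \<Otimes>\<^sub>M Leb (-S)))"
proof -
  have "(\<integral>\<^sup>+ x. f x \<partial>Leb UNIV) = (\<integral>\<^sup>+ x. f x \<partial>distr (Leb S \<Otimes>\<^sub>M Leb (-S)) (Leb UNIV) (merge S (-S)))"
    by (simp add: Leb_distr)
  also have "\<dots> = (\<integral>\<^sup>+ w. f (merge S (-S) w) \<partial>(Leb S \<Otimes>\<^sub>M Leb (-S)))"
    using assms by (subst nn_integral_distr[OF merge_meas]) auto
  finally show ?thesis .
qed

lemma gen_restrict_obs: "restrict (gen_out Ghat (mask S) x z) S = restrict x S"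
  by (auto simp: gen_out_def mask_def restrict_def fun_eq_iff)

lemma Leb_fold:
  fixes S :: "'i::finite set"
  assumes f: "f \<in> borel_measurable (Leb UNIV)"
  shows "integral\<^sup>N (Leb UNIV) f = (\<integral>\<^sup>+ x. (\<integral>\<^sup>+ y. f (merge S (-S) (x, y)) \<partial>Leb (-S)) \<partial>Leb S)"
  using PL.product_nn_integral_fold[of S "-S" f] f unfolding Leb_def by simp

lemma restrict_merge_sub: "T \<subseteq> S \<Longrightarrow> restrict (merge S (-S) (t1, t2)) T = restrict t1 T"
  by (auto simp: restrict_def merge_def fun_eq_iff)

lemma sec_meas:
  fixes S :: "'i::finite set"
  assumes f: "f \<in> borel_measurable (Leb UNIV)" and t1: "t1 \<in> space (Leb S)"
  shows "(\<lambda>u. f (merge S (-S) (t1, u))) \<in> borel_measurable (Leb (-S))"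
  using measurable_compose[OF measurable_Pair1'[OF t1] measurable_compose[OF merge_meas f]] by simp

lemma secint_meas:
  fixes S :: "'i::finite set" and f :: "('i \<Rightarrow> real) \<Rightarrow> real"
  assumes f: "f \<in> borel_measurable (Leb UNIV)"
  shows "(\<lambda>t1. \<integral>\<^sup>+ u. ennreal (f (merge S (-S) (t1, u))) \<partial>Leb (-S)) \<in> borel_measurable (Leb S)"
proof -
  interpret LN: sigma_finite_measure "Leb (-S)" by (rule Leb_sf)
  have "(\<lambda>w. ennreal (f (merge S (-S) w))) \<in> borel_measurable (Leb S \<Otimes>\<^sub>M Leb (-S))"
    using measurable_compose[OF measurable_compose[OF merge_meas f] measurable_ennreal] by simp
  then show ?thesis
    using LN.borel_measurable_nn_integral[of "\<lambda>t1 u. ennreal (f (merge S (-S) (t1, u)))" "Leb S"]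
    by (simp add: case_prod_beta')
qed

lemma marg_nn:
  fixes S :: "'i::finite set" and f :: "('i \<Rightarrow> real) \<Rightarrow> real"
  assumes f: "f \<in> borel_measurable (Leb UNIV)" and nn: "\<And>x. f x \<ge> 0" and t1: "t1 \<in> space (Leb S)"
  shows "marg S f t1 = enn2real (\<integral>\<^sup>+ u. ennreal (f (merge S (-S) (t1, u))) \<partial>Leb (-S))"
  unfolding marg_def by (rule integral_eq_nn_integral[OF sec_meas[OF f t1]]) (simp add: nn)



lemma step1:
  fixes S :: "'i::finite set" and h :: "('i\<Rightarrow>real)\<Rightarrow>real" and ci :: ennreal
    and G :: "('i\<Rightarrow>real) measure" and Ghat :: "('i \<Rightarrow> real) \<Rightarrow> ('i \<Rightarrow> real)"
    and q :: "('i \<Rightarrow> real) \<Rightarrow> ('i \<Rightarrow> real) \<Rightarrow> real"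
  assumes hm: "h \<in> borel_measurable (Leb UNIV)"
    and ci: "ci \<noteq> 0" "ci \<noteq> \<infinity>"
    and fin: "(\<integral>\<^sup>+ x. ennreal (h x) * ci \<partial>Leb UNIV) \<noteq> \<infinity>"
    and G: "prob_space G" and sG: "sets G = sets (Leb UNIV)"
    and Ghat_meas: "Ghat \<in> Leb UNIV \<rightarrow>\<^sub>M Leb UNIV"
    and q_meas: "(\<lambda>(t1, t2). q t1 t2) \<in> borel_measurable (Leb S \<Otimes>\<^sub>M Leb (- S))"
    and q_cond: "\<And>x. distr G (Leb (- S))
                   (\<lambda>z. restrict (gen_out Ghat (mask S) x z) (- S))
                 = density (Leb (- S)) (\<lambda>t2. ennreal (q (restrict x S) t2))"
    and opt: "distr (density (Leb UNIV) (\<lambda>x. ennreal (h x) * ci) \<Otimes>\<^sub>M G) (Leb UNIV)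
                 (\<lambda>(x, z). gen_out Ghat (mask S) x z) = density (Leb UNIV) (\<lambda>x. ennreal (h x) * ci)"
  shows "AE w in Leb S \<Otimes>\<^sub>M Leb (-S).
           (\<integral>\<^sup>+ u. ennreal (h (merge S (-S) (fst w, u))) \<partial>Leb (-S)) * ennreal (q (fst w) (snd w))
             = ennreal (h (merge S (-S) w))"
proof -
  let ?P = "density (Leb UNIV) (\<lambda>x. ennreal (h x) * ci)"
  let ?LO = "Leb S" let ?LN = "Leb (-S)"
  let ?LL = "?LO \<Otimes>\<^sub>M ?LN"
  let ?gen = "\<lambda>(x, z). gen_out Ghat (mask S) x z"
  define s where "s = (\<lambda>x::'i\<Rightarrow>real. (restrict x S, restrict x (-S)))"
  define mh where "mh = (\<lambda>t1. \<integral>\<^sup>+ u. ennreal (h (merge S (-S) (t1, u))) \<partial>?LN)"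
  define g1 where "g1 = (\<lambda>w. mh (fst w) * ennreal (q (fst w) (snd w)) * ci)"
  define g2 where "g2 = (\<lambda>w. ennreal (h (merge S (-S) w)) * ci)"
  interpret LO: sigma_finite_measure ?LO by (rule Leb_sf)
  interpret LN: sigma_finite_measure ?LN by (rule Leb_sf)
  interpret G: prob_space G by (rule G)
  have sm[measurable]: "s \<in> Leb UNIV \<rightarrow>\<^sub>M ?LL"
    unfolding s_def by (auto intro!: measurable_Pair restr_meas)
  have mm[measurable]: "merge S (-S) \<in> ?LL \<rightarrow>\<^sub>M Leb UNIV" by (rule merge_meas)
  have hm'[measurable]: "h \<in> borel_measurable (Leb UNIV)" by (rule hm)
  have hmm: "(\<lambda>w. h (merge S (-S) w)) \<in> borel_measurable ?LL"
    using measurable_compose[OF mm hm] .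
  have mhm[measurable]: "mh \<in> borel_measurable ?LO"
    unfolding mh_def
    using LN.borel_measurable_nn_integral[of "\<lambda>t1 u. ennreal (h (merge S (-S) (t1, u)))" ?LO] hmm
    by (simp add: case_prod_beta')
  have qm: "(\<lambda>w. q (fst w) (snd w)) \<in> borel_measurable ?LL"
    using q_meas by (simp add: case_prod_beta')
  have qsec: "\<And>t1. t1 \<in> space ?LO \<Longrightarrow> (\<lambda>t2. q t1 t2) \<in> borel_measurable ?LN"
    using measurable_compose[OF measurable_Pair1' qm] by simp
  have qsec': "\<And>t1. t1 \<in> space ?LO \<Longrightarrow> (\<lambda>t2. ennreal (q t1 t2)) \<in> borel_measurable ?LN"
    using measurable_compose[OF qsec measurable_ennreal] by simp
  have g1m: "g1 \<in> borel_measurable ?LL"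
    unfolding g1_def using qm mhm by measurable
  have g2m: "g2 \<in> borel_measurable ?LL"
    unfolding g2_def using hmm by measurable
  have sP: "sets ?P = sets (Leb UNIV)" by simp
  have genm: "?gen \<in> ?P \<Otimes>\<^sub>M G \<rightarrow>\<^sub>M Leb UNIV"
  proof -
    have e: "sets (?P \<Otimes>\<^sub>M G) = sets (Leb UNIV \<Otimes>\<^sub>M G)"
      by (rule sets_pair_measure_cong) auto
    show ?thesis using gen_meas[OF Ghat_meas sG] by (subst measurable_cong_sets[OF e refl])
  qed
  have D2: "distr ?P ?LL s = density ?LL g2"
  proof (rule measure_eqI)
    show "sets (distr ?P ?LL s) = sets (density ?LL g2)" by simp
    fix T assume "T \<in> sets (distr ?P ?LL s)"
    then have T[measurable]: "T \<in> sets ?LL" by simp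
    have "emeasure (distr ?P ?LL s) T = \<integral>\<^sup>+ w. indicator T w \<partial>distr ?P ?LL s"
      using T by simp
    also have "\<dots> = \<integral>\<^sup>+ x. indicator T (s x) \<partial>?P"
      by (subst nn_integral_distr) (auto simp: sm)
    also have "\<dots> = \<integral>\<^sup>+ x. (ennreal (h x) * ci) * indicator T (s x) \<partial>Leb UNIV"
      by (subst nn_integral_density) auto
    also have "\<dots> = \<integral>\<^sup>+ w. (ennreal (h (merge S (-S) w)) * ci) * indicator T (s (merge S (-S) w)) \<partial>?LL"
      by (rule nn_Leb_split) measurable
    also have "\<dots> = \<integral>\<^sup>+ w. g2 w * indicator T w \<partial>?LL"
    proof (rule nn_integral_cong)
      fix w assume "w \<in> space ?LL"
      then have "s (merge S (-S) w) = w"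
        by (cases w) (auto simp: s_def space_pair_measure restrict_Leb)
      then show "(ennreal (h (merge S (-S) w)) * ci) * indicator T (s (merge S (-S) w)) = g2 w * indicator T w"
        by (simp add: g2_def)
    qed
    also have "\<dots> = emeasure (density ?LL g2) T"
      using g2m by (subst emeasure_density) auto
    finally show "emeasure (distr ?P ?LL s) T = emeasure (density ?LL g2) T" .
  qed
  have D1: "distr ?P ?LL s = density ?LL g1"
  proof (rule measure_eqI)
    show "sets (distr ?P ?LL s) = sets (density ?LL g1)" by simp
    fix T assume "T \<in> sets (distr ?P ?LL s)"
    then have T[measurable]: "T \<in> sets ?LL" by simp
    define H where "H = (\<lambda>t1. \<integral>\<^sup>+ t2. ennreal (q t1 t2) * indicator T (t1, t2) \<partial>?LN)"
    have Hm: "H \<in> borel_measurable ?LO"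
      unfolding H_def
      using LN.borel_measurable_nn_integral[of "\<lambda>t1 t2. ennreal (q t1 t2) * indicator T (t1, t2)" ?LO] qm
      by (simp add: case_prod_beta' measurable_compose[OF _ borel_measurable_indicator] )
    have indsec: "\<And>t1. t1 \<in> space ?LO \<Longrightarrow> (\<lambda>t2. indicator T (t1, t2) :: ennreal) \<in> borel_measurable ?LN"
      by (rule measurable_compose[OF measurable_Pair1' borel_measurable_indicator[OF T]])
    have qis: "\<And>t1. t1 \<in> space ?LO \<Longrightarrow> (\<lambda>t2. ennreal (q t1 t2) * indicator T (t1, t2)) \<in> borel_measurable ?LN"
      by (rule borel_measurable_times_ennreal[OF qsec' indsec])
    have HmR: "(\<lambda>x. H (restrict x S)) \<in> borel_measurable (Leb UNIV)"
      using measurable_compose[OF restr_meas[of S UNIV] Hm] by simp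
    have HLL[measurable]: "(\<lambda>w. H (restrict (merge S (-S) w) S)) \<in> borel_measurable ?LL"
      using measurable_compose[OF mm HmR] .
    have hmm'[measurable]: "(\<lambda>w. h (merge S (-S) w)) \<in> borel_measurable ?LL" by (rule hmm)
    have "emeasure (distr ?P ?LL s) T = emeasure (distr (distr (?P \<Otimes>\<^sub>M G) (Leb UNIV) ?gen) ?LL s) T"
      by (simp add: opt)
    also have "\<dots> = emeasure (distr (?P \<Otimes>\<^sub>M G) ?LL (s \<circ> ?gen)) T"
      using genm sm by (simp add: distr_distr)
    also have "\<dots> = \<integral>\<^sup>+ w. indicator T w \<partial>distr (?P \<Otimes>\<^sub>M G) ?LL (s \<circ> ?gen)"
      by (rule nn_integral_indicator[symmetric]) simp
    also have "\<dots> = \<integral>\<^sup>+ w. indicator T ((s \<circ> ?gen) w) \<partial>(?P \<Otimes>\<^sub>M G)"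
      by (rule nn_integral_distr) (auto intro: measurable_comp[OF genm sm])
    also have "\<dots> = \<integral>\<^sup>+ w. indicator T (s (?gen w)) \<partial>(?P \<Otimes>\<^sub>M G)"
      by simp
    also have "\<dots> = \<integral>\<^sup>+ x. \<integral>\<^sup>+ z. indicator T (s (?gen (x, z))) \<partial>G \<partial>?P"
      using genm by (subst G.nn_integral_fst[symmetric]) (auto simp: case_prod_beta')
    also have "\<dots> = \<integral>\<^sup>+ x. H (restrict x S) \<partial>?P"
    proof (rule nn_integral_cong)
      fix x assume x: "x \<in> space ?P"
      have gNm: "(\<lambda>z. restrict (gen_out Ghat (mask S) x z) (- S)) \<in> G \<rightarrow>\<^sub>M ?LN"
        using measurable_compose[OF measurable_Pair2[OF genm x] restr_meas[of "-S" UNIV]] by simp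
      have "(\<integral>\<^sup>+ z. indicator T (s (?gen (x, z))) \<partial>G)
          = \<integral>\<^sup>+ z. indicator T (restrict x S, restrict (gen_out Ghat (mask S) x z) (- S)) \<partial>G"
        by (simp add: s_def gen_restrict_obs)
      also have "\<dots> = \<integral>\<^sup>+ t2. indicator T (restrict x S, t2) \<partial>distr G ?LN (\<lambda>z. restrict (gen_out Ghat (mask S) x z) (- S))"
        by (subst nn_integral_distr[OF gNm])
           (auto intro!: measurable_compose[OF measurable_Pair1'[OF restrict_in_Leb] borel_measurable_indicator[OF T]])
      also have "\<dots> = \<integral>\<^sup>+ t2. ennreal (q (restrict x S) t2) * indicator T (restrict x S, t2) \<partial>?LN"
        unfolding q_cond
        by (subst nn_integral_density) (auto intro!: qsec' measurable_compose[OF measurable_Pair1'[OF restrict_in_Leb] borel_measurable_indicator[OF T]])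
      finally show "(\<integral>\<^sup>+ z. indicator T (s (?gen (x, z))) \<partial>G) = H (restrict x S)"
        by (simp add: H_def)
    qed
    also have "\<dots> = \<integral>\<^sup>+ x. (ennreal (h x) * ci) * H (restrict x S) \<partial>Leb UNIV"
      using HmR by (subst nn_integral_density) auto
    also have "\<dots> = \<integral>\<^sup>+ w. (ennreal (h (merge S (-S) w)) * ci) * H (restrict (merge S (-S) w) S) \<partial>?LL"
      using HmR hm by (subst nn_Leb_split) auto
    also have "\<dots> = \<integral>\<^sup>+ t1. \<integral>\<^sup>+ u. (ennreal (h (merge S (-S) (t1, u))) * ci) * H (restrict (merge S (-S) (t1, u)) S) \<partial>?LN \<partial>?LO"
      by (subst LN.nn_integral_fst[symmetric]) (simp_all add: case_prod_beta', measurable)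
    also have "\<dots> = \<integral>\<^sup>+ t1. \<integral>\<^sup>+ u. ennreal (h (merge S (-S) (t1, u))) * (ci * H t1) \<partial>?LN \<partial>?LO"
      by (intro nn_integral_cong) (simp add: restrict_Leb mult_ac)
    also have "\<dots> = \<integral>\<^sup>+ t1. mh t1 * (ci * H t1) \<partial>?LO"
      unfolding mh_def
      by (intro nn_integral_cong nn_integral_multc) (use hmm in \<open>auto intro: measurable_Pair2\<close>)
    also have "\<dots> = \<integral>\<^sup>+ t1. \<integral>\<^sup>+ t2. (mh t1 * ci) * (ennreal (q t1 t2) * indicator T (t1, t2)) \<partial>?LN \<partial>?LO"
      unfolding H_def
      by (intro nn_integral_cong, subst nn_integral_cmult) (auto simp: mult_ac intro!: qis)
    also have "\<dots> = \<integral>\<^sup>+ w. g1 w * indicator T w \<partial>?LL"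
    proof -
      have "(\<integral>\<^sup>+ t1. \<integral>\<^sup>+ t2. (mh t1 * ci) * (ennreal (q t1 t2) * indicator T (t1, t2)) \<partial>?LN \<partial>?LO)
          = \<integral>\<^sup>+ t1. \<integral>\<^sup>+ t2. (\<lambda>w. g1 w * indicator T w) (t1, t2) \<partial>?LN \<partial>?LO"
        by (intro nn_integral_cong) (simp add: g1_def mult_ac)
      also have "\<dots> = \<integral>\<^sup>+ w. g1 w * indicator T w \<partial>?LL"
        by (rule LN.nn_integral_fst) (use g1m in measurable)
      finally show ?thesis .
    qed
    also have "\<dots> = emeasure (density ?LL g1) T"
      using g1m by (subst emeasure_density) auto
    finally show "emeasure (distr ?P ?LL s) T = emeasure (density ?LL g1) T" .
  qed
  have fin2: "integral\<^sup>N ?LL g2 \<noteq> \<infinity>"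
    using fin nn_Leb_split[of "\<lambda>x. ennreal (h x) * ci" S] by (simp add: g2_def)
  have "AE w in ?LL. g2 w = g1 w"
    using finite_density_unique[OF g2m g1m _ _ fin2] D1 D2 by simp
  then show ?thesis
  proof (rule AE_mp, intro AE_I2 impI)
    fix w assume "g2 w = g1 w"
    then have "ennreal (h (merge S (-S) w)) * ci = (mh (fst w) * ennreal (q (fst w) (snd w))) * ci"
      by (simp add: g1_def g2_def)
    then show "(\<integral>\<^sup>+ u. ennreal (h (merge S (-S) (fst w, u))) \<partial>?LN) * ennreal (q (fst w) (snd w)) = ennreal (h (merge S (-S) w))"
      using ci mult_divide_eq_ennreal by (metis mh_def infinity_ennreal_def)
  qed
qed


lemma partA0:
  fixes M :: "'a measure" and X :: "'a \<Rightarrow> ('i::finite \<Rightarrow> real)" and Pat :: "'a \<Rightarrow> nat"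
    and \<phi> :: "nat \<Rightarrow> ('i \<Rightarrow> real) \<Rightarrow> real"
  assumes joint: "distributed M (Leb UNIV \<Otimes>\<^sub>M count_space UNIV) (\<lambda>\<omega>. (X \<omega>, Pat \<omega>))
                  (\<lambda>(x, j). ennreal (\<phi> j x))"
    and A: "A \<in> sets (Leb UNIV)"
  shows "emeasure M ((\<lambda>\<omega>. (X \<omega>, Pat \<omega>)) -` (A \<times> {j}) \<inter> space M) = \<integral>\<^sup>+ x. ennreal (\<phi> j x) * indicator A x \<partial>Leb UNIV"
proof -
  let ?LC = "Leb UNIV \<Otimes>\<^sub>M count_space (UNIV::nat set)"
  have XP: "(\<lambda>\<omega>. (X \<omega>, Pat \<omega>)) \<in> M \<rightarrow>\<^sub>M ?LC" and dd: "distr M ?LC (\<lambda>\<omega>. (X \<omega>, Pat \<omega>)) = density ?LC (\<lambda>(x, j). ennreal (\<phi> j x))"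
    using joint unfolding distributed_def by auto
  interpret sf: sigma_finite_measure "count_space (UNIV::nat set)" by (rule sigma_finite_measure_count_space)
  have phim: "(\<lambda>(x, j). ennreal (\<phi> j x)) \<in> borel_measurable ?LC"
    using joint unfolding distributed_def by auto
    have "emeasure M ((\<lambda>\<omega>. (X \<omega>, Pat \<omega>)) -` (A \<times> {j}) \<inter> space M)
        = emeasure (distr M ?LC (\<lambda>\<omega>. (X \<omega>, Pat \<omega>))) (A \<times> {j})"
      using A by (subst emeasure_distr[OF XP]) auto
    also have "\<dots> = \<integral>\<^sup>+ w. (\<lambda>(x, j). ennreal (\<phi> j x)) w * indicator (A \<times> {j}) w \<partial>?LC"
      unfolding dd using A by (subst emeasure_density) (auto intro: phim)
    also have "\<dots> = \<integral>\<^sup>+ x. \<integral>\<^sup>+ i. ennreal (\<phi> i x) * indicator (A \<times> {j}) (x, i) \<partial>count_space UNIV \<partial>Leb UNIV"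
      using A phim by (subst sf.nn_integral_fst[symmetric]) (auto simp: case_prod_beta)
    also have "\<dots> = \<integral>\<^sup>+ x. ennreal (\<phi> j x) * indicator A x \<partial>Leb UNIV"
    proof (rule nn_integral_cong)
      fix x
      have "(\<lambda>i. ennreal (\<phi> i x) * indicator (A \<times> {j}) (x, i)) = (\<lambda>i. (ennreal (\<phi> j x) * indicator A x) * indicator {j} i)"
        by (auto simp: indicator_def)
      then show "(\<integral>\<^sup>+ i. ennreal (\<phi> i x) * indicator (A \<times> {j}) (x, i) \<partial>count_space UNIV) = ennreal (\<phi> j x) * indicator A x"
        by (simp add: nn_integral_cmult_indicator)
    qed
    finally show ?thesis .
qed

lemma partA:
  fixes M :: "'a measure" and X :: "'a \<Rightarrow> ('i::finite \<Rightarrow> real)" and Pat :: "'a \<Rightarrow> nat"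
    and \<phi> :: "nat \<Rightarrow> ('i \<Rightarrow> real) \<Rightarrow> real"
  assumes joint: "distributed M (Leb UNIV \<Otimes>\<^sub>M count_space UNIV) (\<lambda>\<omega>. (X \<omega>, Pat \<omega>))
                  (\<lambda>(x, j). ennreal (\<phi> j x))"
    and \<phi>_meas: "\<And>j. \<phi> j \<in> borel_measurable (Leb UNIV)"
  shows "distr (uniform_measure M {\<omega> \<in> space M. Pat \<omega> = 1}) (Leb UNIV) X
       = density (Leb UNIV) (\<lambda>x. ennreal (\<phi> 1 x) * inverse (emeasure M {\<omega> \<in> space M. Pat \<omega> = 1}))"
proof -
  let ?C = "{\<omega> \<in> space M. Pat \<omega> = 1}"
  let ?c = "emeasure M ?C"
  let ?LC = "Leb UNIV \<Otimes>\<^sub>M count_space (UNIV::nat set)"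
  have XP: "(\<lambda>\<omega>. (X \<omega>, Pat \<omega>)) \<in> M \<rightarrow>\<^sub>M ?LC" and dd: "distr M ?LC (\<lambda>\<omega>. (X \<omega>, Pat \<omega>)) = density ?LC (\<lambda>(x, j). ennreal (\<phi> j x))"
    using joint unfolding distributed_def by auto
  have Xm[measurable]: "X \<in> M \<rightarrow>\<^sub>M Leb UNIV" using measurable_compose[OF XP measurable_fst] by simp
  have Pm[measurable]: "Pat \<in> M \<rightarrow>\<^sub>M count_space UNIV" using measurable_compose[OF XP measurable_snd] by simp
  have Cs: "?C \<in> sets M" by measurable
  interpret sf: sigma_finite_measure "count_space (UNIV::nat set)" by (rule sigma_finite_measure_count_space)
  have phim: "(\<lambda>(x, j). ennreal (\<phi> j x)) \<in> borel_measurable ?LC"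
    using joint unfolding distributed_def by auto
  show ?thesis
  proof (rule measure_eqI)
    show "sets (distr (uniform_measure M ?C) (Leb UNIV) X) = sets (density (Leb UNIV) (\<lambda>x. ennreal (\<phi> 1 x) * inverse ?c))" by simp
    fix A assume "A \<in> sets (distr (uniform_measure M ?C) (Leb UNIV) X)"
    then have A: "A \<in> sets (Leb UNIV)" by simp
    have eq1: "?C \<inter> (X -` A \<inter> space M) = (\<lambda>\<omega>. (X \<omega>, Pat \<omega>)) -` (A \<times> {1}) \<inter> space M" by auto
    have "emeasure M ((\<lambda>\<omega>. (X \<omega>, Pat \<omega>)) -` (A \<times> {1}) \<inter> space M) = \<integral>\<^sup>+ x. ennreal (\<phi> 1 x) * indicator A x \<partial>Leb UNIV"
      by (rule partA0[OF joint A])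
    then have key: "emeasure M (?C \<inter> (X -` A \<inter> space M)) = \<integral>\<^sup>+ x. ennreal (\<phi> 1 x) * indicator A x \<partial>Leb UNIV"
      unfolding eq1 .
    have "emeasure (distr (uniform_measure M ?C) (Leb UNIV) X) A = emeasure (uniform_measure M ?C) (X -` A \<inter> space M)"
      using A by (subst emeasure_distr) auto
    also have "\<dots> = emeasure M (?C \<inter> (X -` A \<inter> space M)) / ?c"
      using A Cs by (subst emeasure_uniform_measure) auto
    also have "\<dots> = (\<integral>\<^sup>+ x. ennreal (\<phi> 1 x) * indicator A x \<partial>Leb UNIV) * inverse ?c"
      unfolding key by (simp add: divide_ennreal_def)
    also have "\<dots> = \<integral>\<^sup>+ x. (ennreal (\<phi> 1 x) * inverse ?c) * indicator A x \<partial>Leb UNIV"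
      using A \<phi>_meas by (subst nn_integral_multc[symmetric]) (auto simp: mult_ac)
    also have "\<dots> = emeasure (density (Leb UNIV) (\<lambda>x. ennreal (\<phi> 1 x) * inverse ?c)) A"
      using A \<phi>_meas by (subst emeasure_density) auto
    finally show "emeasure (distr (uniform_measure M ?C) (Leb UNIV) X) A = emeasure (density (Leb UNIV) (\<lambda>x. ennreal (\<phi> 1 x) * inverse ?c)) A" .
  qed
qed


theorem theorem1:
  fixes M :: "'a measure"
    and X :: "'a \<Rightarrow> ('i::finite \<Rightarrow> real)"
    and Pat :: "'a \<Rightarrow> nat"
    and K :: nat and k :: nat
    and obs :: "nat \<Rightarrow> 'i set"
    and \<phi> :: "nat \<Rightarrow> ('i \<Rightarrow> real) \<Rightarrow> real"
    and Ghat :: "('i \<Rightarrow> real) \<Rightarrow> ('i \<Rightarrow> real)"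
    and q :: "('i \<Rightarrow> real) \<Rightarrow> ('i \<Rightarrow> real) \<Rightarrow> real"
  assumes M: "prob_space M"
    and joint: "distributed M (Leb UNIV \<Otimes>\<^sub>M count_space UNIV) (\<lambda>\<omega>. (X \<omega>, Pat \<omega>))
                  (\<lambda>(x, j). ennreal (\<phi> j x))"
    and \<phi>_meas: "\<And>j. \<phi> j \<in> borel_measurable (Leb UNIV)"
    and \<phi>_nonneg: "\<And>j x. \<phi> j x \<ge> 0"
    and Pat_range: "AE \<omega> in M. Pat \<omega> \<in> {1..K}"
    and obs1: "obs 1 = UNIV"
    and obs_ne: "(\<Inter>j\<in>{1..K}. obs j) \<noteq> {}"
    and mar: "MAR K (\<Inter>j\<in>{1..K}. obs j) \<phi>"
    and complete_pos: "emeasure M {\<omega> \<in> space M. Pat \<omega> = 1} > 0"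
    and k: "k \<in> {2..K}"
    and Ghat_meas: "Ghat \<in> Leb UNIV \<rightarrow>\<^sub>M Leb UNIV"
    and q_meas: "(\<lambda>(t1, t2). q t1 t2) \<in> borel_measurable (Leb (obs k) \<Otimes>\<^sub>M Leb (- obs k))"
    and q_nonneg: "\<And>t1 t2. q t1 t2 \<ge> 0"
    and q_cond: "\<And>x. distr std_gauss (Leb (- obs k))
                   (\<lambda>z. restrict (gen_out Ghat (mask (obs k)) x z) (- obs k))
                 = density (Leb (- obs k)) (\<lambda>t2. ennreal (q (restrict x (obs k)) t2))"
    and optimal: "distr (distr (uniform_measure M {\<omega> \<in> space M. Pat \<omega> = 1}) (Leb UNIV) X
                          \<Otimes>\<^sub>M std_gauss)
                    (Leb UNIV) (\<lambda>(x, z). gen_out Ghat (mask (obs k)) x z)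
                  = distr (uniform_measure M {\<omega> \<in> space M. Pat \<omega> = 1}) (Leb UNIV) X"
  shows "AE t1 in Leb (obs k). marg (obs k) (\<phi> 1) t1 > 0 \<longrightarrow>
           (AE t2 in Leb (- obs k).
              q t1 t2 = cond_dens (obs k) (\<lambda>x. \<Sum>j\<in>{1..K}. \<phi> j x) t1 t2)"
proof -
  interpret M: prob_space M by (rule M)
  define S where "S = obs k"
  define Ob where "Ob = (\<Inter>j\<in>{1..K}. obs j)"
  define F where "F = (\<lambda>x. \<Sum>j\<in>{1..K}. \<phi> j x)"
  let ?C = "{\<omega> \<in> space M. Pat \<omega> = 1}"
  define c where "c = emeasure M ?C"
  define ci where "ci = inverse c"
  let ?LO = "Leb S" let ?LN = "Leb (-S)" let ?LL = "Leb S \<Otimes>\<^sub>M Leb (-S)"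
  interpret LO: sigma_finite_measure ?LO by (rule Leb_sf)
  interpret LN: sigma_finite_measure ?LN by (rule Leb_sf)
  interpret LL: pair_sigma_finite ?LO ?LN by (simp add: pair_sigma_finite_def LO.sigma_finite_measure_axioms LN.sigma_finite_measure_axioms)
  have K1: "1 \<in> {1..K}" and kK: "k \<in> {1..K}" using k by auto
  have ObS: "Ob \<subseteq> S" unfolding Ob_def S_def using kK by auto
  have Fm[measurable]: "F \<in> borel_measurable (Leb UNIV)" unfolding F_def using \<phi>_meas by measurable
  have Fnn: "\<And>x. F x \<ge> 0" unfolding F_def by (simp add: \<phi>_nonneg sum_nonneg)
  have phiF: "\<And>x. \<phi> 1 x \<le> F x" unfolding F_def
    using K1 by (intro member_le_sum) (auto simp: \<phi>_nonneg)
  have c0: "c \<noteq> 0" using complete_pos by (simp add: c_def)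
  have cinf: "c \<noteq> \<infinity>" by (simp add: c_def M.emeasure_finite)
  have ci: "ci \<noteq> 0" "ci \<noteq> \<infinity>" using c0 cinf by (auto simp: ci_def)
  have PA: "distr (uniform_measure M ?C) (Leb UNIV) X = density (Leb UNIV) (\<lambda>x. ennreal (\<phi> 1 x) * ci)"
    unfolding ci_def c_def by (rule partA[OF joint \<phi>_meas])
  have Xm: "X \<in> M \<rightarrow>\<^sub>M Leb UNIV"
    using joint unfolding distributed_def using measurable_compose[OF _ measurable_fst] by fastforce
  have Cs: "?C \<in> sets M"
  proof -
    have "Pat \<in> M \<rightarrow>\<^sub>M count_space UNIV"
      using joint unfolding distributed_def using measurable_compose[OF _ measurable_snd] by fastforce
    then show ?thesis by measurable
  qed
  have Pprob: "prob_space (distr (uniform_measure M ?C) (Leb UNIV) X)"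
  proof (rule prob_space.prob_space_distr)
    show "prob_space (uniform_measure M ?C)"
      by (rule prob_space_uniform_measure) (use c0 cinf in \<open>auto simp: c_def\<close>)
    show "X \<in> uniform_measure M ?C \<rightarrow>\<^sub>M Leb UNIV" using Xm by simp
  qed
  have fin: "(\<integral>\<^sup>+ x. ennreal (\<phi> 1 x) * ci \<partial>Leb UNIV) \<noteq> \<infinity>"
  proof -
    have "(\<integral>\<^sup>+ x. ennreal (\<phi> 1 x) * ci \<partial>Leb UNIV) = emeasure (density (Leb UNIV) (\<lambda>x. ennreal (\<phi> 1 x) * ci)) (space (Leb UNIV))"
      using \<phi>_meas by (subst emeasure_density) (auto intro!: nn_integral_cong simp: indicator_def)
    also have "\<dots> = 1"
      using prob_space.emeasure_space_1[OF Pprob] unfolding PA by simp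
    finally show ?thesis by simp
  qed

  have Gprob: "prob_space std_gauss"
    unfolding std_gauss_def by (rule prob_space_PiM) (simp add: prob_space_normal_density)
  have sG: "sets std_gauss = sets (Leb UNIV)"
    unfolding std_gauss_def Leb_def by (rule sets_PiM_cong) auto
  define m\<phi> where "m\<phi> = (\<lambda>t1. \<integral>\<^sup>+ u. ennreal (\<phi> 1 (merge S (-S) (t1, u))) \<partial>?LN)"
  define mF where "mF = (\<lambda>t1. \<integral>\<^sup>+ u. ennreal (F (merge S (-S) (t1, u))) \<partial>?LN)"
  have R1: "AE w in ?LL. m\<phi> (fst w) * ennreal (q (fst w) (snd w)) = ennreal (\<phi> 1 (merge S (-S) w))"
    unfolding m\<phi>_def
    by (rule step1[OF \<phi>_meas ci fin Gprob sG Ghat_meas q_meas[folded S_def] q_cond[folded S_def] optimal[unfolded PA, folded S_def]])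
  have R1': "AE t1 in ?LO. AE t2 in ?LN. m\<phi> t1 * ennreal (q t1 t2) = ennreal (\<phi> 1 (merge S (-S) (t1, t2)))"
    using LL.AE_pair[OF R1] by simp
  have mar1: "AE x in Leb UNIV. \<phi> 1 x * marg Ob F (restrict x Ob) = F x * marg Ob (\<phi> 1) (restrict x Ob)"
    using mar K1 unfolding MAR_def Ob_def[symmetric] F_def by blast
  have "AE w in ?LL. \<phi> 1 (merge S (-S) w) * marg Ob F (restrict (merge S (-S) w) Ob)
            = F (merge S (-S) w) * marg Ob (\<phi> 1) (restrict (merge S (-S) w) Ob)"
    by (rule AE_distrD[OF merge_meas]) (use mar1 in \<open>simp only: Leb_distr\<close>)
  then have R2: "AE t1 in ?LO. AE t2 in ?LN. \<phi> 1 (merge S (-S) (t1, t2)) * marg Ob F (restrict t1 Ob)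
            = F (merge S (-S) (t1, t2)) * marg Ob (\<phi> 1) (restrict t1 Ob)"
    using LL.AE_pair by (fastforce simp: restrict_merge_sub[OF ObS])
  define AFn where "AFn = (\<lambda>s. \<integral>\<^sup>+ w. ennreal (F (merge Ob (-Ob) (s, w))) \<partial>Leb (-Ob))"
  have AFnm[measurable]: "AFn \<in> borel_measurable (Leb Ob)"
    unfolding AFn_def by (rule secint_meas[OF Fm])
  have AFr: "\<And>s. s \<in> space (Leb Ob) \<Longrightarrow> marg Ob F s = enn2real (AFn s)"
    unfolding AFn_def by (rule marg_nn[OF Fm Fnn])
  have spU: "space (Leb (UNIV::'i set)) = UNIV" by (simp add: space_Leb)
  have finF: "(\<integral>\<^sup>+ x. ennreal (F x) \<partial>Leb UNIV) \<noteq> \<infinity>"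
  proof -
    have "(\<integral>\<^sup>+ x. ennreal (F x) \<partial>Leb UNIV) = (\<integral>\<^sup>+ x. (\<Sum>j\<in>{1..K}. ennreal (\<phi> j x)) \<partial>Leb UNIV)"
      unfolding F_def by (simp add: sum_ennreal \<phi>_nonneg)
    also have "\<dots> = (\<Sum>j\<in>{1..K}. \<integral>\<^sup>+ x. ennreal (\<phi> j x) \<partial>Leb UNIV)"
      by (rule nn_integral_sum) (use \<phi>_meas in simp)
    also have "\<dots> \<noteq> \<infinity>"
    proof -
      have "\<And>j. (\<integral>\<^sup>+ x. ennreal (\<phi> j x) \<partial>Leb UNIV) \<noteq> \<infinity>"
      proof -
        fix j
        have "(\<integral>\<^sup>+ x. ennreal (\<phi> j x) \<partial>Leb UNIV) = (\<integral>\<^sup>+ x. ennreal (\<phi> j x) * indicator UNIV x \<partial>Leb UNIV)" by simp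
        also have "\<dots> = emeasure M ((\<lambda>\<omega>. (X \<omega>, Pat \<omega>)) -` (UNIV \<times> {j}) \<inter> space M)"
          by (rule partA0[OF joint, symmetric]) (simp add: spU[symmetric])
        finally show "(\<integral>\<^sup>+ x. ennreal (\<phi> j x) \<partial>Leb UNIV) \<noteq> \<infinity>" by (simp add: M.emeasure_finite)
      qed
      then show ?thesis by (simp add: ennreal_sum_eq_top)
    qed
    finally show ?thesis .
  qed
  have AEfin: "AE s in Leb Ob. AFn s \<noteq> \<infinity>"
  proof (rule nn_integral_PInf_AE[OF AFnm])
    show "integral\<^sup>N (Leb Ob) AFn \<noteq> \<infinity>"
      using finF Leb_fold[of "\<lambda>x. ennreal (F x)" Ob] Fm by (simp add: AFn_def)
  qed
  define Zp where "Zp = (\<lambda>s. enn2real (AFn s) = 0)"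
  have Zrm[measurable]: "(\<lambda>x. enn2real (AFn (restrict x Ob))) \<in> borel_measurable (Leb UNIV)"
    using measurable_compose[OF restr_meas[of Ob UNIV] AFnm] by (simp add: borel_measurable_enn2real)
  have ZrmO[measurable]: "(\<lambda>x. enn2real (AFn (restrict x Ob))) \<in> borel_measurable ?LO"
    using measurable_compose[OF restr_meas[OF ObS] AFnm] by (simp add: borel_measurable_enn2real)
  define ZU where "ZU = {x \<in> space (Leb UNIV). Zp (restrict x Ob)}"
  define ZO where "ZO = {t1 \<in> space ?LO. Zp (restrict t1 Ob)}"
  define ZB where "ZB = {s \<in> space (Leb Ob). Zp s}"
  have ZUs[measurable]: "ZU \<in> sets (Leb UNIV)" unfolding ZU_def Zp_def by measurable
  have ZOs[measurable]: "ZO \<in> sets ?LO" unfolding ZO_def Zp_def by measurable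
  have ZBs[measurable]: "ZB \<in> sets (Leb Ob)" unfolding ZB_def Zp_def by measurable
  define I0 where "I0 = (\<integral>\<^sup>+ x. ennreal (F x) * indicator ZU x \<partial>Leb UNIV)"
  have I0a: "I0 = 0"
  proof -
    have "I0 = \<integral>\<^sup>+ s. \<integral>\<^sup>+ w. ennreal (F (merge Ob (-Ob) (s, w))) * indicator ZU (merge Ob (-Ob) (s, w)) \<partial>Leb (-Ob) \<partial>Leb Ob"
      unfolding I0_def by (rule Leb_fold) measurable
    also have "\<dots> = \<integral>\<^sup>+ s. AFn s * indicator ZB s \<partial>Leb Ob"
    proof (rule nn_integral_cong)
      fix s assume s: "s \<in> space (Leb Ob)"
      have "\<And>w. indicator ZU (merge Ob (-Ob) (s, w)) = (indicator ZB s :: ennreal)"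
        using s by (simp add: ZU_def ZB_def spU restrict_merge1 restrict_Leb indicator_def)
      then show "(\<integral>\<^sup>+ w. ennreal (F (merge Ob (-Ob) (s, w))) * indicator ZU (merge Ob (-Ob) (s, w)) \<partial>Leb (-Ob)) = AFn s * indicator ZB s"
        unfolding AFn_def using nn_integral_multc[OF measurable_compose[OF sec_meas[OF Fm s] measurable_ennreal]] by simp
    qed
    also have "\<dots> = \<integral>\<^sup>+ s. 0 \<partial>Leb Ob"
    proof (rule nn_integral_cong_AE)
      show "AE s in Leb Ob. AFn s * indicator ZB s = 0"
        using AEfin by eventually_elim (auto simp: ZB_def Zp_def indicator_def enn2real_eq_0_iff)
    qed
    finally show ?thesis by simp
  qed
  have I0b: "I0 = \<integral>\<^sup>+ t1. mF t1 * indicator ZO t1 \<partial>?LO"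
  proof -
    have "I0 = \<integral>\<^sup>+ t1. \<integral>\<^sup>+ w. ennreal (F (merge S (-S) (t1, w))) * indicator ZU (merge S (-S) (t1, w)) \<partial>?LN \<partial>?LO"
      unfolding I0_def by (rule Leb_fold) measurable
    also have "\<dots> = \<integral>\<^sup>+ t1. mF t1 * indicator ZO t1 \<partial>?LO"
    proof (rule nn_integral_cong)
      fix s assume s: "s \<in> space ?LO"
      have "\<And>w. indicator ZU (merge S (-S) (s, w)) = (indicator ZO s :: ennreal)"
        using s by (simp add: ZU_def ZO_def spU restrict_merge_sub[OF ObS] indicator_def)
      then show "(\<integral>\<^sup>+ w. ennreal (F (merge S (-S) (s, w))) * indicator ZU (merge S (-S) (s, w)) \<partial>?LN) = mF s * indicator ZO s"
        unfolding mF_def using nn_integral_multc[OF measurable_compose[OF sec_meas[OF Fm s] measurable_ennreal]] by simp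
    qed
    finally show ?thesis .
  qed
  have mFm[measurable]: "mF \<in> borel_measurable ?LO" unfolding mF_def by (rule secint_meas[OF Fm])
  have m\<phi>m[measurable]: "m\<phi> \<in> borel_measurable ?LO" unfolding m\<phi>_def by (rule secint_meas[OF \<phi>_meas])
  have R3: "AE t1 in ?LO. Zp (restrict t1 Ob) \<longrightarrow> m\<phi> t1 = 0"
  proof -
    have "AE t1 in ?LO. mF t1 * indicator ZO t1 = 0"
      using I0a I0b by (subst nn_integral_0_iff_AE[symmetric]) auto
    then show ?thesis
    proof (rule AE_mp, intro AE_I2 impI)
      fix t1 assume t1: "t1 \<in> space ?LO" and z: "mF t1 * indicator ZO t1 = 0" and zp: "Zp (restrict t1 Ob)"
      then have "mF t1 = 0" by (simp add: ZO_def)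
      moreover have "m\<phi> t1 \<le> mF t1"
        unfolding m\<phi>_def mF_def by (intro nn_integral_mono ennreal_leI) (rule phiF)
      ultimately show "m\<phi> t1 = 0" by simp
    qed
  qed

  have main: "AE t1 in ?LO. marg S (\<phi> 1) t1 > 0 \<longrightarrow> (AE t2 in ?LN. q t1 t2 = cond_dens S F t1 t2)"
    using AE_space R1' R2 R3
  proof eventually_elim
    case (elim t1)
    then have t1: "t1 \<in> space ?LO"
      and a: "AE t2 in ?LN. m\<phi> t1 * ennreal (q t1 t2) = ennreal (\<phi> 1 (merge S (-S) (t1, t2)))"
      and b: "AE t2 in ?LN. \<phi> 1 (merge S (-S) (t1, t2)) * marg Ob F (restrict t1 Ob)
            = F (merge S (-S) (t1, t2)) * marg Ob (\<phi> 1) (restrict t1 Ob)"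
      and c: "Zp (restrict t1 Ob) \<longrightarrow> m\<phi> t1 = 0" by auto
    show ?case
    proof
      assume pos: "marg S (\<phi> 1) t1 > 0"
      define A where "A = marg Ob F (restrict t1 Ob)"
      define B where "B = marg Ob (\<phi> 1) (restrict t1 Ob)"
      have mphi: "marg S (\<phi> 1) t1 = enn2real (m\<phi> t1)"
        unfolding m\<phi>_def by (rule marg_nn[OF \<phi>_meas \<phi>_nonneg t1])
      have mFr: "marg S F t1 = enn2real (mF t1)"
        unfolding mF_def by (rule marg_nn[OF Fm Fnn t1])
      define r where "r = enn2real (m\<phi> t1)"
      have r0: "r > 0" using pos mphi r_def by simp
      have mr: "m\<phi> t1 = ennreal r"
        using r0 unfolding r_def by (cases "m\<phi> t1") auto
      have A0: "A \<ge> 0" unfolding A_def marg_def by (auto intro!: integral_nonneg_AE simp: Fnn)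
      have B0: "B \<ge> 0" unfolding B_def marg_def by (auto intro!: integral_nonneg_AE simp: \<phi>_nonneg)
      have Ane: "A \<noteq> 0"
      proof
        assume "A = 0"
        then have "Zp (restrict t1 Ob)"
          unfolding Zp_def A_def using AFr[OF restrict_in_Leb] by simp
        then have "m\<phi> t1 = 0" using c by simp
        then show False using mr r0 by simp
      qed
      define d where "d = B / A"
      have d0: "d \<ge> 0" unfolding d_def using A0 B0 by simp
      have bb: "AE t2 in ?LN. \<phi> 1 (merge S (-S) (t1, t2)) = F (merge S (-S) (t1, t2)) * d"
        using b
      proof eventually_elim
        case (elim t2)
        then have "\<phi> 1 (merge S (-S) (t1, t2)) * A = F (merge S (-S) (t1, t2)) * B"
          unfolding A_def B_def .
        then show ?case using Ane unfolding d_def by (simp add: field_simps)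
      qed
      have "m\<phi> t1 = \<integral>\<^sup>+ t2. ennreal (F (merge S (-S) (t1, t2)) * d) \<partial>?LN"
        unfolding m\<phi>_def by (rule nn_integral_cong_AE) (use bb in \<open>eventually_elim, simp\<close>)
      also have "\<dots> = \<integral>\<^sup>+ t2. ennreal d * ennreal (F (merge S (-S) (t1, t2))) \<partial>?LN"
        using d0 Fnn by (intro nn_integral_cong) (simp add: ennreal_mult mult.commute)
      also have "\<dots> = ennreal d * mF t1"
        unfolding mF_def
        by (rule nn_integral_cmult) (rule measurable_compose[OF sec_meas[OF Fm t1] measurable_ennreal])
      finally have mdF: "m\<phi> t1 = ennreal d * mF t1" .
      have dpos: "d > 0" using mdF mr r0 d0 by (cases "d = 0") auto
      have mFfin: "mF t1 \<noteq> \<infinity>"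
      proof
        assume "mF t1 = \<infinity>"
        then have "m\<phi> t1 = \<infinity>" using mdF dpos by (simp add: ennreal_mult_top)
        then show False using mr by simp
      qed
      define rF where "rF = enn2real (mF t1)"
      have mFe: "mF t1 = ennreal rF" using mFfin unfolding rF_def by (cases "mF t1") auto
      have rF0: "rF \<ge> 0" unfolding rF_def by simp
      have rdr: "r = d * rF"
        using mdF mr mFe d0 rF0 r0 by (simp add: ennreal_mult[symmetric])
      have rFpos: "rF > 0" using rdr r0 d0 rF0 by (cases "rF = 0") auto
      show "AE t2 in ?LN. q t1 t2 = cond_dens S F t1 t2"
        using a bb
      proof eventually_elim
        case (elim t2)
        have "ennreal (r * q t1 t2) = ennreal (\<phi> 1 (merge S (-S) (t1, t2)))"
          using elim(1) mr r0 q_nonneg by (simp add: ennreal_mult)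
        then have "r * q t1 t2 = \<phi> 1 (merge S (-S) (t1, t2))"
          using r0 q_nonneg \<phi>_nonneg by (subst (asm) ennreal_inj) auto
        then have "d * rF * q t1 t2 = F (merge S (-S) (t1, t2)) * d"
          using elim(2) rdr by simp
        then have "rF * q t1 t2 = F (merge S (-S) (t1, t2))"
          using dpos by (simp add: mult.assoc mult.commute)
        then show ?case
          unfolding cond_dens_def mFr rF_def[symmetric] using rFpos by (simp add: field_simps)
      qed
    qed
  qed
  then show ?thesis unfolding S_def F_def .
qed

end
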